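(* For every natural number $\alpha<\omega$, \[ f_{\omega^{\omega^\alpha}}\in d_{1/2}^{\omega^{1+\alpha}}\Big(B_{\ell_1([0,\omega^{\omega^\alpha}])}\Big). \]
   Context: Ordinal arithmetic throughout. For an ordinal $\gamma$, $[0,\gamma]$ has the order topology and $\ell_1([0,\gamma])$ is identified with $C([0,\gamma])^*$ (weak$^*$-topology accordingly). For $\beta\le\gamma$, $f_\beta\in\ell_1([0,\gamma])$ is the indicator of $\{\beta\}$. For a weak$^*$-compact $K$ in a dual $X^*$: $H(x,t)=\{x^*: x^*(x)>t\}$; a weak$^*$-slice of $K$ is a nonempty $H(x,t)\cap K$; $d_\varepsilon K$ is $K$ minus the union of all weak$^*$-slices of $K$ of norm diameter $<\varepsilon$; $d_\varepsilon^0K=K$, $d_\varepsilon^{\beta+1}K=d_\varepsilon(d_\varepsilon^\beta K)$, $d_\varepsilon^\beta K=\bigcap_{\mu<\beta}d_\varepsilon^\mu K$ for limit $\beta$. *)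

theory Defs
  imports "HOL-Analysis.Analysis" "HOL-Library.Multiset_Order"
begin

text \<open>If the linearly (well-)ordered type 'a represents an initial segment of
ordinals of order type theta, then 'a multiset with the multiset
(Dershowitz--Manna) order represents the ordinals below omega^theta via
Cantor normal form: M corresponds to the sum of omega^b for b in M, taken in
non-increasing order. Thus nat (= omega) gives nat multiset (ordinals below
omega^omega) and nat multiset multiset (ordinals below omega^(omega^omega)).\<close>

definition opow :: "'a \<Rightarrow> 'a multiset" where
  "opow b = {#b#}"

instantiation multiset :: (linorder) topological_space
begin
definition open_multiset :: "'a multiset set \<Rightarrow> bool" where
  "open_multiset = generate_topology (range lessThan \<union> range greaterThan)"
instance
proof
  show "open (UNIV :: 'a multiset set)"
    unfolding open_multiset_def by (rule generate_topology.UNIV)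
  show "open S \<Longrightarrow> open T \<Longrightarrow> open (S \<inter> T)" for S T :: "'a multiset set"
    unfolding open_multiset_def by (rule generate_topology.Int)
  show "\<forall>S\<in>K. open S \<Longrightarrow> open (\<Union> K)" for K :: "'a multiset set set"
    unfolding open_multiset_def by (rule generate_topology.UN) auto
qed
end

instance multiset :: (linorder) linorder_topology
  by standard (simp add: open_multiset_def)

text \<open>Continuous real functions on [0,gamma] = {..gamma} (subspace of the order
topology, which equals the order topology of the interval).\<close>
definition Cspace :: "'a::linorder_topology \<Rightarrow> ('a \<Rightarrow> real) set" where
  "Cspace \<gamma> = {f. continuous_on {..\<gamma>} f}"

definition ell1 :: "'a::linorder \<Rightarrow> ('a \<Rightarrow> real) set" where
  "ell1 \<gamma> = {\<mu>. (\<forall>x. \<not> x \<le> \<gamma> \<longrightarrow> \<mu> x = 0) \<and> (\<lambda>x. \<bar>\<mu> x\<bar>) summable_on {..\<gamma>}}"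

definition l1norm :: "'a::linorder \<Rightarrow> ('a \<Rightarrow> real) \<Rightarrow> real" where
  "l1norm \<gamma> \<mu> = (\<Sum>\<^sub>\<infinity>x\<in>{..\<gamma>}. \<bar>\<mu> x\<bar>)"

definition dpair :: "'a::linorder \<Rightarrow> ('a \<Rightarrow> real) \<Rightarrow> ('a \<Rightarrow> real) \<Rightarrow> real" where
  "dpair \<gamma> \<mu> f = (\<Sum>\<^sub>\<infinity>x\<in>{..\<gamma>}. \<mu> x * f x)"

definition unit_ball1 :: "'a::linorder \<Rightarrow> ('a \<Rightarrow> real) set" where
  "unit_ball1 \<gamma> = {\<mu> \<in> ell1 \<gamma>. l1norm \<gamma> \<mu> \<le> 1}"

definition wslice :: "'a::linorder \<Rightarrow> ('a \<Rightarrow> real) set \<Rightarrow> ('a \<Rightarrow> real) \<Rightarrow> real \<Rightarrow> ('a \<Rightarrow> real) set" where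
  "wslice \<gamma> S f t = {\<mu> \<in> S. dpair \<gamma> \<mu> f > t}"

text \<open>Norm diameter (extended-real valued, so it is meaningful for any set).\<close>
definition ndiam :: "'a::linorder \<Rightarrow> ('a \<Rightarrow> real) set \<Rightarrow> ereal" where
  "ndiam \<gamma> S = (SUP \<mu>\<in>S. SUP \<nu>\<in>S. ereal (l1norm \<gamma> (\<mu> - \<nu>)))"

definition szd :: "'a::linorder_topology \<Rightarrow> real \<Rightarrow> ('a \<Rightarrow> real) set \<Rightarrow> ('a \<Rightarrow> real) set" where
  "szd \<gamma> \<epsilon> K = K - \<Union> {wslice \<gamma> K f t | f t. f \<in> Cspace \<gamma> \<and> wslice \<gamma> K f t \<noteq> {}
                                   \<and> ndiam \<gamma> (wslice \<gamma> K f t) < ereal \<epsilon>}"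

text \<open>Transfinite iteration over a well-ordered index type (ordinals):
d^0 K = K, d^(b+1) K = d(d^b K), d^b K = intersection of d^m K (m < b) for limit b.\<close>
definition trans_iter :: "('s set \<Rightarrow> 's set) \<Rightarrow> 's set \<Rightarrow> 'i::wellorder \<Rightarrow> 's set" where
  "trans_iter D K = wfrec {(x, y). x < y} (\<lambda>F b.
     if \<forall>m. \<not> m < b then K
     else if \<exists>m. m < b \<and> (\<forall>n. n < b \<longrightarrow> n \<le> m)
       then D (F (THE m. m < b \<and> (\<forall>n. n < b \<longrightarrow> n \<le> m)))
     else (\<Inter>m\<in>{m. m < b}. F m))"

definition szd_iter :: "'a::linorder_topology \<Rightarrow> real \<Rightarrow> 'i::wellorder \<Rightarrow> ('a \<Rightarrow> real) set \<Rightarrow> ('a \<Rightarrow> real) set" where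
  "szd_iter \<gamma> \<epsilon> b K = trans_iter (szd \<gamma> \<epsilon>) K b"

definition fpt :: "'a \<Rightarrow> 'a \<Rightarrow> real" where
  "fpt \<beta> = (\<lambda>x. if x = \<beta> then 1 else 0)"

end

theory Submission
  imports Defs
begin


lemma mset_lt_top:
  fixes M N :: "'a::linorder multiset"
  assumes "\<forall>z>y. count M z = count N z" "count M y < count N y"
  shows "M < N"
  unfolding less_multiset\<^sub>H\<^sub>O
proof (intro conjI allI impI)
  show "M \<noteq> N" using assms(2) by auto
  fix z assume "count N z < count M z"
  with assms have "z < y" by (metis less_imp_not_less linorder_neqE order.asym)
  then show "\<exists>x>z. count M x < count N x" using assms(2) by blast
qed

lemma mset_lt_nec:
  fixes M N :: "'a::linorder multiset"
  assumes "M < N"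
  shows "\<exists>y. count M y < count N y \<and> (\<forall>z>y. count M z = count N z)"
proof -
  define D where "D = {z. count M z \<noteq> count N z}"
  have fin: "finite D"
    by (rule finite_subset[of _ "set_mset M \<union> set_mset N"]) (auto simp: D_def count_eq_zero_iff[symmetric])
  have "M \<noteq> N" using assms by auto
  then have ne: "D \<noteq> {}" by (auto simp: D_def multiset_eq_iff)
  define y where "y = Max D"
  have yD: "y \<in> D" using fin ne by (simp add: y_def)
  have above: "\<forall>z>y. count M z = count N z"
    using fin y_def D_def Max_ge leD by blast
  have "\<not> count N y < count M y"
  proof
    assume "count N y < count M y"
    then obtain x where "x > y" "count M x < count N x" using assms unfolding less_multiset\<^sub>H\<^sub>O by blast
    with above show False by auto
  qed
  then have "count M y < count N y" using yD by (auto simp: D_def)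
  then show ?thesis using above by blast
qed

definition bdiv :: "nat multiset \<Rightarrow> nat multiset" where
  "bdiv M = image_mset (\<lambda>x. x - 1) (filter_mset (\<lambda>x. x \<noteq> 0) M)"

lemma count_bdiv: "count (bdiv M) y = count M (Suc y)"
  unfolding bdiv_def by (induction M) auto

lemma lt_add0:
  fixes m M :: "nat multiset"
  assumes "m < add_mset 0 M"
  shows "m \<le> M"
proof (rule ccontr)
  assume "\<not> m \<le> M"
  then have "M < m" by simp
  then obtain y where y: "count M y < count m y" "\<forall>z>y. count M z = count m z"
    using mset_lt_nec by blast
  show False
  proof (cases "y = 0")
    case False
    have "add_mset 0 M < m"
      by (rule mset_lt_top[of y]) (use y False in auto)
    then show False using assms by simp
  next
    case True
    show False
    proof (cases "count m 0 = Suc (count M 0)")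
      case True
      have "m = add_mset 0 M"
        by (rule multiset_eqI) (use y \<open>y = 0\<close> True in \<open>auto simp: gr0_conv_Suc\<close>)
      then show False using assms by simp
    next
      case False
      have "add_mset 0 M < m"
        by (rule mset_lt_top[of 0]) (use y \<open>y = 0\<close> False in auto)
      then show False using assms by simp
    qed
  qed
qed

lemma bdiv_lt:
  fixes m b :: "nat multiset"
  assumes "m < b" "count b 0 = 0"
  shows "bdiv m < bdiv b"
proof -
  obtain y where y: "count m y < count b y" "\<forall>z>y. count m z = count b z"
    using mset_lt_nec[OF assms(1)] by blast
  then have "y \<noteq> 0" using assms(2) by (metis less_nat_zero_code)
  then obtain y' where y': "y = Suc y'" using not0_implies_Suc by blast
  show ?thesis
    by (rule mset_lt_top[of y']) (use y y' in \<open>auto simp: count_bdiv\<close>)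
qed

lemma exists_between:
  fixes b p :: "'a::linorder multiset" and s :: 'a
  assumes "b < p" "\<forall>e\<in>#p. s < e"
  shows "\<exists>q. b < q \<and> q < p \<and> (\<forall>e\<in>#q. s \<le> e)"
proof -
  obtain y where y: "count b y < count p y" "\<forall>z>y. count b z = count p z"
    using mset_lt_nec[OF assms(1)] by blast
  have yp: "y \<in># p" using y(1) by (metis less_nat_zero_code not_in_iff)
  then have sy: "s < y" using assms(2) by auto
  define A where "A = insert s {z \<in> set_mset b. z < y}"
  have finA: "finite A" by (simp add: A_def)
  define d where "d = Max A"
  have dA: "d \<in> A" unfolding d_def by (rule Max_in[OF finA]) (simp add: A_def)
  have dy: "d < y" using dA sy by (auto simp: A_def)
  have sd: "s \<le> d" using finA by (simp add: d_def A_def)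
  have bd: "\<And>z. z \<in># b \<Longrightarrow> z < y \<Longrightarrow> z \<le> d" using finA by (simp add: d_def A_def)
  define q where "q = filter_mset (\<lambda>z. y < z) p + replicate_mset (count p y - 1) y
                      + replicate_mset (count b d + 1) d"
  have cq: "count q z = (if y < z then count p z else 0) + (if z = y then count p y - 1 else 0)
                         + (if z = d then count b d + 1 else 0)" for z
    unfolding q_def by simp
  have "q < p"
    by (rule mset_lt_top[of y]) (use dy y(1) in \<open>auto simp: cq\<close>)
  moreover have "b < q"
  proof (cases "count b y < count p y - 1")
    case True
    show ?thesis
      by (rule mset_lt_top[of y]) (use dy y True in \<open>auto simp: cq\<close>)
  next
    case False
    have "\<forall>z>d. count b z = count q z"
    proof (intro allI impI)
      fix z assume zd: "d < z"
      show "count b z = count q z"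
      proof (cases "z < y")
        case True
        have "count b z = 0"
        proof (rule ccontr)
          assume "count b z \<noteq> 0"
          then have "z \<in># b" by (metis not_in_iff)
          with bd[OF this True] zd show False by simp
        qed
        then show ?thesis using True zd by (auto simp: cq)
      next
        case False
        then show ?thesis using zd dy y \<open>\<not> count b y < count p y - 1\<close> by (auto simp: cq)
      qed
    qed
    then show ?thesis
      by (intro mset_lt_top[of d]) (auto simp: cq)
  qed
  moreover have "\<forall>e\<in>#q. s \<le> e"
  proof
    fix e assume "e \<in># q"
    then have "count q e \<noteq> 0" by simp
    then have "(y < e \<and> e \<in># p) \<or> e = y \<or> e = d"
      by (auto simp: cq split: if_splits simp del: count_eq_zero_iff simp add: count_eq_zero_iff[symmetric])
    then show "s \<le> e" using assms(2) sy sd by auto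
  qed
  ultimately show ?thesis by blast
qed

lemma infinite_between:
  fixes b p :: "'a::linorder multiset" and s :: 'a
  assumes "b < p" "\<forall>e\<in>#p. s < e"
  shows "infinite {q. b < q \<and> q < p \<and> (\<forall>e\<in>#q. s \<le> e)}"
proof
  let ?Q = "{q. b < q \<and> q < p \<and> (\<forall>e\<in>#q. s \<le> e)}"
  assume fin: "finite ?Q"
  have "?Q \<noteq> {}" using exists_between[OF assms] by blast
  then have mQ: "Max ?Q \<in> ?Q" using fin by (rule Max_in[rotated])
  then obtain q where q: "Max ?Q < q" "q < p" "\<forall>e\<in>#q. s \<le> e"
    using exists_between[of "Max ?Q" p s] assms(2) by blast
  then have "q \<in> ?Q" using mQ by auto
  then have "q \<le> Max ?Q" using fin by simp
  with q(1) show False by simp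
qed



lemma trans_iter_T0:
  assumes "\<forall>m. \<not> m < (b::'i::wellorder)"
  shows "trans_iter D K b = K"
  unfolding trans_iter_def by (subst wfrec[OF wf]) (use assms in simp)

lemma trans_iter_T1:
  assumes "m0 < (b::'i::wellorder)" "\<forall>n. n < b \<longrightarrow> n \<le> m0"
  shows "trans_iter D K b = D (trans_iter D K m0)"
proof -
  have th: "(THE m. m < b \<and> (\<forall>n. n < b \<longrightarrow> n \<le> m)) = m0"
    by (rule the_equality) (use assms in \<open>auto intro: order.antisym\<close>)
  show ?thesis
    unfolding trans_iter_def
    apply (subst wfrec[OF wf])
    using assms by (auto simp: th cut_def)
qed

lemma trans_iter_T2:
  assumes "\<not> (\<exists>m. m < (b::'i::wellorder) \<and> (\<forall>n. n < b \<longrightarrow> n \<le> m))" "\<exists>m. m < b"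
  shows "trans_iter D K b = (\<Inter>m\<in>{m. m < b}. trans_iter D K m)"
proof -
  show ?thesis
    unfolding trans_iter_def
    apply (subst wfrec[OF wf])
    using assms by (auto simp: cut_def)
qed

lemma ndiam_ge:
  assumes "\<mu> \<in> S" "\<nu> \<in> S"
  shows "ereal (l1norm \<gamma> (\<mu> - \<nu>)) \<le> ndiam \<gamma> S"
  unfolding ndiam_def
  by (rule SUP_upper2[OF assms(1)]) (rule SUP_upper[OF assms(2)])

lemma szd_iter_lower:
  fixes P :: "'i::wellorder \<Rightarrow> ('a::linorder_topology \<Rightarrow> real) set"
  assumes P0: "\<And>b. P b \<subseteq> K"
    and Pmono: "\<And>b m. m < b \<Longrightarrow> P b \<subseteq> P m"
    and Pstep: "\<And>b m x f t. m < b \<Longrightarrow> x \<in> P b \<Longrightarrow> f \<in> Cspace \<gamma> \<Longrightarrow> dpair \<gamma> x f > t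
                  \<Longrightarrow> (\<exists>y\<in>P m. dpair \<gamma> y f > t \<and> l1norm \<gamma> (y - x) \<ge> \<epsilon>)"
  shows "P b \<subseteq> szd_iter \<gamma> \<epsilon> b K"
proof (induction b rule: less_induct)
  case (less b)
  show ?case
  proof (cases "\<forall>m. \<not> m < b")
    case True
    then show ?thesis unfolding szd_iter_def using P0[of b] trans_iter_T0[OF True, of "szd \<gamma> \<epsilon>" K] by simp
  next
    case False
    show ?thesis
    proof (cases "\<exists>m. m < b \<and> (\<forall>n. n < b \<longrightarrow> n \<le> m)")
      case True
      then obtain m0 where m0: "m0 < b" "\<forall>n. n < b \<longrightarrow> n \<le> m0" by blast
      have eq: "szd_iter \<gamma> \<epsilon> b K = szd \<gamma> \<epsilon> (szd_iter \<gamma> \<epsilon> m0 K)"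
        unfolding szd_iter_def by (rule trans_iter_T1[OF m0])
      show ?thesis
      proof
        fix x assume xP: "x \<in> P b"
        have xS: "x \<in> szd_iter \<gamma> \<epsilon> m0 K" using less.IH[OF m0(1)] Pmono[OF m0(1)] xP by blast
        have "x \<notin> wslice \<gamma> (szd_iter \<gamma> \<epsilon> m0 K) f t"
          if f: "f \<in> Cspace \<gamma>" and nd: "ndiam \<gamma> (wslice \<gamma> (szd_iter \<gamma> \<epsilon> m0 K) f t) < ereal \<epsilon>" for f t
        proof
          assume xW: "x \<in> wslice \<gamma> (szd_iter \<gamma> \<epsilon> m0 K) f t"
          then have "dpair \<gamma> x f > t" by (simp add: wslice_def)
          then obtain y where y: "y \<in> P m0" "dpair \<gamma> y f > t" "l1norm \<gamma> (y - x) \<ge> \<epsilon>"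
            using Pstep[OF m0(1) xP f] by blast
          have "y \<in> szd_iter \<gamma> \<epsilon> m0 K" using less.IH[OF m0(1)] y(1) by blast
          then have yW: "y \<in> wslice \<gamma> (szd_iter \<gamma> \<epsilon> m0 K) f t" using y(2) by (simp add: wslice_def)
          have "ereal \<epsilon> \<le> ndiam \<gamma> (wslice \<gamma> (szd_iter \<gamma> \<epsilon> m0 K) f t)"
            using ndiam_ge[OF yW xW, of \<gamma>] y(3) by (meson ereal_less_eq(3) order_trans)
          with nd show False by simp
        qed
        then show "x \<in> szd_iter \<gamma> \<epsilon> b K" unfolding eq szd_def using xS by blast
      qed
    next
      case nT: False
      have eq: "szd_iter \<gamma> \<epsilon> b K = (\<Inter>m\<in>{m. m < b}. szd_iter \<gamma> \<epsilon> m K)"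
        unfolding szd_iter_def by (rule trans_iter_T2[OF nT]) (use False in blast)
      show ?thesis unfolding eq using less.IH Pmono by blast
    qed
  qed
qed



definition U :: "'a set \<Rightarrow> 'a \<Rightarrow> real" where
  "U F = (\<lambda>x. if x \<in> F then 1 / real (card F) else 0)"

lemma infsum_fin_supp:
  fixes g :: "'a::linorder \<Rightarrow> real"
  assumes "finite A" "A \<subseteq> {..\<gamma>}" "\<And>x. x \<in> {..\<gamma>} - A \<Longrightarrow> g x = 0"
  shows "infsum g {..\<gamma>} = sum g A"
proof -
  have "infsum g {..\<gamma>} = infsum g A"
    by (rule infsum_cong_neutral) (use assms in auto)
  then show ?thesis using assms(1) by simp
qed

lemma dpair_U:
  assumes "finite F" "F \<subseteq> {..\<gamma>}"
  shows "dpair \<gamma> (U F) f = (\<Sum>x\<in>F. f x) / real (card F)"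
proof -
  have "dpair \<gamma> (U F) f = (\<Sum>x\<in>F. U F x * f x)"
    unfolding dpair_def by (rule infsum_fin_supp) (use assms in \<open>auto simp: U_def\<close>)
  also have "\<dots> = (\<Sum>x\<in>F. f x / real (card F))"
    by (rule sum.cong) (auto simp: U_def)
  finally show ?thesis by (simp add: sum_divide_distrib)
qed

lemma U_ball:
  assumes "finite F" "F \<noteq> {}" "F \<subseteq> {..\<gamma>}"
  shows "U F \<in> unit_ball1 \<gamma>"
proof -
  have "(\<lambda>x. \<bar>U F x\<bar>) summable_on {..\<gamma>} \<longleftrightarrow> (\<lambda>x. \<bar>U F x\<bar>) summable_on F"
    by (rule summable_on_cong_neutral) (use assms in \<open>auto simp: U_def\<close>)
  then have s: "(\<lambda>x. \<bar>U F x\<bar>) summable_on {..\<gamma>}" using assms(1) by simp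
  have "l1norm \<gamma> (U F) = (\<Sum>x\<in>F. \<bar>U F x\<bar>)"
    unfolding l1norm_def by (rule infsum_fin_supp) (use assms in \<open>auto simp: U_def\<close>)
  also have "\<dots> = (\<Sum>x\<in>F. 1 / real (card F))"
    by (rule sum.cong) (auto simp: U_def)
  also have "\<dots> = 1" using assms by simp
  finally have "l1norm \<gamma> (U F) = 1" .
  moreover have "\<forall>x. \<not> x \<le> \<gamma> \<longrightarrow> U F x = 0" using assms by (auto simp: U_def)
  ultimately show ?thesis using s by (simp add: unit_ball1_def ell1_def)
qed

lemma l1_half:
  assumes "finite F" "G \<subseteq> F" "card F = 2 * card G" "G \<noteq> {}" "F \<subseteq> {..\<gamma>}"
  shows "l1norm \<gamma> (U G - U F) = 1"
proof -
  have fG: "finite G" using assms(1,2) finite_subset by blast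
  have cG: "card G > 0" using fG assms(4) by (simp add: card_gt_0_iff)
  have "l1norm \<gamma> (U G - U F) = (\<Sum>x\<in>F. \<bar>(U G - U F) x\<bar>)"
    unfolding l1norm_def by (rule infsum_fin_supp) (use assms in \<open>auto simp: U_def\<close>)
  also have "\<dots> = (\<Sum>x\<in>F. 1 / real (card F))"
  proof (rule sum.cong)
    fix x assume "x \<in> F"
    then show "\<bar>(U G - U F) x\<bar> = 1 / real (card F)"
      using assms(3) cG by (auto simp: U_def field_simps)
  qed simp
  also have "\<dots> = 1" using assms cG by simp
  finally show ?thesis .
qed

lemma l1_disj:
  assumes "finite F" "finite G" "F \<inter> G = {}" "F \<noteq> {}" "G \<noteq> {}" "F \<subseteq> {..\<gamma>}" "G \<subseteq> {..\<gamma>}"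
  shows "l1norm \<gamma> (U G - U F) = 2"
proof -
  have "l1norm \<gamma> (U G - U F) = (\<Sum>x\<in>G \<union> F. \<bar>(U G - U F) x\<bar>)"
    unfolding l1norm_def by (rule infsum_fin_supp) (use assms in \<open>auto simp: U_def\<close>)
  also have "\<dots> = (\<Sum>x\<in>G. \<bar>(U G - U F) x\<bar>) + (\<Sum>x\<in>F. \<bar>(U G - U F) x\<bar>)"
    by (rule sum.union_disjoint) (use assms in auto)
  also have "(\<Sum>x\<in>G. \<bar>(U G - U F) x\<bar>) = (\<Sum>x\<in>G. 1 / real (card G))"
    by (rule sum.cong) (use assms in \<open>auto simp: U_def\<close>)
  also have "(\<Sum>x\<in>F. \<bar>(U G - U F) x\<bar>) = (\<Sum>x\<in>F. 1 / real (card F))"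
    by (rule sum.cong) (use assms in \<open>auto simp: U_def\<close>)
  also have "(\<Sum>x\<in>G. 1 / real (card G)) + (\<Sum>x\<in>F. 1 / real (card F)) = (2::real)"
    using assms by simp
  finally show ?thesis .
qed



definition Pset :: "nat multiset multiset \<Rightarrow> nat multiset \<Rightarrow> (nat multiset multiset \<Rightarrow> real) set" where
  "Pset \<gamma> b = {U F | F b'. b \<le> b' \<and> finite F \<and> card F = 2 ^ count b' 0 \<and>
                   F \<subseteq> {p. p \<le> \<gamma> \<and> p \<noteq> {#} \<and> (\<forall>e\<in>#p. bdiv b' \<le> e)}}"

lemma cont_left:
  fixes f :: "'a::linorder_topology \<Rightarrow> real"
  assumes "continuous_on {..\<gamma>} f" "p \<le> \<gamma>" "f p > t" "y < p"
  shows "\<exists>a<p. \<forall>q. a < q \<and> q \<le> p \<longrightarrow> f q > t"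
proof -
  obtain A where A: "open A" "A \<inter> {..\<gamma>} = f -` {t<..} \<inter> {..\<gamma>}"
    using assms(1) open_greaterThan[of t] unfolding continuous_on_open_invariant by blast
  have "p \<in> A" using A(2) assms(2,3) by blast
  then obtain a where a: "a < p" "{a<..p} \<subseteq> A" using open_left[OF A(1) _ assms(4)] by blast
  have "\<forall>q. a < q \<and> q \<le> p \<longrightarrow> f q > t"
  proof (intro allI impI)
    fix q assume q: "a < q \<and> q \<le> p"
    then have "q \<in> A \<inter> {..\<gamma>}" using a(2) assms(2) by auto
    then show "f q > t" using A(2) by auto
  qed
  then show ?thesis using a(1) by blast
qed

lemma Pset_ball: "Pset \<gamma> b \<subseteq> unit_ball1 \<gamma>"
proof
  fix x assume "x \<in> Pset \<gamma> b"
  then obtain F b' where x: "x = U F" and fF: "finite F" and cF: "card F = 2 ^ count b' 0"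
    and FR: "F \<subseteq> {p. p \<le> \<gamma> \<and> p \<noteq> {#} \<and> (\<forall>e\<in>#p. bdiv b' \<le> e)}"
    unfolding Pset_def by blast
  have "F \<noteq> {}" using cF by (metis card.empty power_not_zero zero_neq_numeral)
  then show "x \<in> unit_ball1 \<gamma>" using U_ball[OF fF] FR x by auto
qed

lemma Pset_mono: "m < b \<Longrightarrow> Pset \<gamma> b \<subseteq> Pset \<gamma> m"
  unfolding Pset_def by (auto intro: order.trans[OF less_imp_le])

lemma Pset_step:
  assumes "m < b" "x \<in> Pset \<gamma> b" "f \<in> Cspace \<gamma>" "dpair \<gamma> x f > t"
  shows "\<exists>y\<in>Pset \<gamma> m. dpair \<gamma> y f > t \<and> l1norm \<gamma> (y - x) \<ge> 1/2"
proof -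
  from assms(2) obtain F b' where x: "x = U F" and bb': "b \<le> b'" and fF: "finite F"
    and cF: "card F = 2 ^ count b' 0"
    and FR: "F \<subseteq> {p. p \<le> \<gamma> \<and> p \<noteq> {#} \<and> (\<forall>e\<in>#p. bdiv b' \<le> e)}"
    unfolding Pset_def by blast
  have Fg: "F \<subseteq> {..\<gamma>}" using FR by auto
  have dx: "dpair \<gamma> x f = (\<Sum>x\<in>F. f x) / real (card F)" using dpair_U[OF fF Fg] x by simp
  show ?thesis
  proof (cases "count b' 0")
    case (Suc k)
    define b'' where "b'' = b' - {#0#}"
    have "0 \<in># b'" using Suc by (metis not_in_iff nat.distinct(1))
    then have b'eq: "b' = add_mset 0 b''" unfolding b''_def by (simp add: insert_DiffM)
    have "m < add_mset 0 b''" using assms(1) bb' b'eq by simp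
    then have mb'': "m \<le> b''" by (rule lt_add0)
    have c'': "count b'' 0 = k" using Suc b''_def by simp
    have bd'': "bdiv b'' = bdiv b'" by (rule multiset_eqI) (simp add: count_bdiv b''_def)
    have "2^k \<le> card F" using cF Suc by simp
    then obtain G1 where G1: "G1 \<subseteq> F" "card G1 = 2^k" "finite G1"
      using obtain_subset_with_card_n by metis
    define G2 where "G2 = F - G1"
    have G2: "G2 \<subseteq> F" "finite G2" using fF by (auto simp: G2_def)
    have cG2: "card G2 = 2^k" unfolding G2_def using card_Diff_subset[OF G1(3,1)] G1(2) cF Suc by simp
    have sumF: "sum f F = sum f G2 + sum f G1" unfolding G2_def using sum.subset_diff[OF G1(1) fF] .
    obtain G where G: "G \<subseteq> F" "card G = 2^k" "sum f G \<ge> sum f F / 2"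
    proof (cases "sum f G1 \<ge> sum f G2")
      case True
      then show ?thesis using that[OF G1(1,2)] sumF by simp
    next
      case False
      then show ?thesis using that[OF G2(1) cG2] sumF by simp
    qed
    have fG: "finite G" using G(1) fF finite_subset by blast
    have neG: "G \<noteq> {}" using G(2) by (metis card.empty power_not_zero zero_neq_numeral)
    have Gg: "G \<subseteq> {..\<gamma>}" using G(1) Fg by blast
    have e1: "dpair \<gamma> (U G) f = sum f G / 2^k" using dpair_U[OF fG Gg] G(2) by simp
    have "real (card F) = 2 * 2^k" using cF Suc by simp
    then have "sum f F / real (card F) = (sum f F / 2) / 2^k" by (simp add: divide_divide_eq_left)
    also have "\<dots> \<le> sum f G / 2^k" by (rule divide_right_mono[OF G(3)]) simp
    finally have "dpair \<gamma> (U G) f \<ge> sum f F / real (card F)" using e1 by simp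
    then have dG: "dpair \<gamma> (U G) f > t" using dx assms(4) by simp
    have "l1norm \<gamma> (U G - x) = 1" unfolding x
      by (rule l1_half[OF fF G(1) _ neG Fg]) (use G(2) cF Suc in simp)
    moreover have "U G \<in> Pset \<gamma> m"
    proof -
      have "G \<subseteq> {p. p \<le> \<gamma> \<and> p \<noteq> {#} \<and> (\<forall>e\<in>#p. bdiv b'' \<le> e)}"
        using G(1) FR bd'' by auto
      then show ?thesis unfolding Pset_def
        using mb'' fG G(2) c'' by (intro CollectI exI[of _ G] exI[of _ b'']) simp
    qed
    ultimately show ?thesis using dG by (intro bexI[of _ "U G"]) simp_all
  next
    case 0
    then have "card F = 1" using cF by simp
    then obtain p where Fp: "F = {p}" by (rule card_1_singletonE)
    have pR: "p \<le> \<gamma>" "p \<noteq> {#}" "\<forall>e\<in>#p. bdiv b' \<le> e" using FR Fp by auto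
    have fp: "f p > t" using dx Fp assms(4) by simp
    have "m < b'" using assms(1) bb' by simp
    then have "bdiv m < bdiv b'" using 0 by (rule bdiv_lt)
    then have pe: "\<forall>e\<in>#p. bdiv m < e" using pR(3) order.strict_trans2 by blast
    have "{#} < p" using pR(2) by simp
    then obtain a where a: "a < p" "\<forall>q. a < q \<and> q \<le> p \<longrightarrow> f q > t"
      using cont_left[of \<gamma> f p t] assms(3) pR(1) fp unfolding Cspace_def by blast
    have "infinite {q. a < q \<and> q < p \<and> (\<forall>e\<in>#q. bdiv m \<le> e)}"
      by (rule infinite_between[OF a(1) pe])
    then obtain G where G: "finite G" "card G = 2 ^ count m 0"
      "G \<subseteq> {q. a < q \<and> q < p \<and> (\<forall>e\<in>#q. bdiv m \<le> e)}"
      using infinite_arbitrarily_large by blast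
    have neG: "G \<noteq> {}" using G(2) by (metis card.empty power_not_zero zero_neq_numeral)
    have Gg: "G \<subseteq> {..\<gamma>}" using G(3) pR(1) by (auto intro: order.trans[OF less_imp_le])
    have GR: "G \<subseteq> {q. q \<le> \<gamma> \<and> q \<noteq> {#} \<and> (\<forall>e\<in>#q. bdiv m \<le> e)}"
      using G(3) Gg by auto
    have ft: "\<forall>q\<in>G. f q > t" using G(3) a(2) by auto
    have "(\<Sum>q\<in>G. t) < sum f G" by (rule sum_strict_mono[OF G(1) neG]) (use ft in auto)
    then have "real (card G) * t < sum f G" by simp
    moreover have "card G > 0" using G(1) neG by (simp add: card_gt_0_iff)
    ultimately have "t < sum f G / real (card G)" by (simp add: field_simps)
    then have dG: "dpair \<gamma> (U G) f > t" using dpair_U[OF G(1) Gg] by simp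
    have "F \<inter> G = {}" using G(3) Fp by auto
    then have "l1norm \<gamma> (U G - x) = 2" unfolding x
      using l1_disj[OF fF G(1) _ _ neG Fg Gg] Fp by simp
    moreover have "U G \<in> Pset \<gamma> m"
      unfolding Pset_def using G(1,2) GR by (intro CollectI exI[of _ G] exI[of _ m]) simp
    ultimately show ?thesis using dG by (intro bexI[of _ "U G"]) simp_all
  qed
qed

theorem mainTheorem10:
  fixes \<alpha> :: nat
  shows "fpt (opow (opow \<alpha>)) \<in>
           szd_iter (opow (opow \<alpha>) :: nat multiset multiset) (1/2)
                    (opow (1 + \<alpha>) :: nat multiset)
                    (unit_ball1 (opow (opow \<alpha>) :: nat multiset multiset))"
proof -
  define \<gamma> where "\<gamma> = (opow (opow \<alpha>) :: nat multiset multiset)"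
  have bd: "bdiv {#Suc \<alpha>#} = {#\<alpha>#}"
    by (rule multiset_eqI) (simp add: count_bdiv opow_def)
  have U1: "U {\<gamma>} = fpt \<gamma>" by (auto simp: U_def fpt_def)
  have "U {\<gamma>} \<in> Pset \<gamma> (opow (1 + \<alpha>))"
    unfolding Pset_def
    by (rule CollectI, rule exI[of _ "{\<gamma>}"], rule exI[of _ "opow (1 + \<alpha>)"])
       (auto simp: bd \<gamma>_def opow_def)
  then have "fpt \<gamma> \<in> Pset \<gamma> (opow (1 + \<alpha>))" using U1 by simp
  moreover have "Pset \<gamma> (opow (1 + \<alpha>)) \<subseteq> szd_iter \<gamma> (1/2) (opow (1 + \<alpha>)) (unit_ball1 \<gamma>)"
    by (rule szd_iter_lower) (use Pset_ball Pset_mono Pset_step in auto)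
  ultimately have "fpt \<gamma> \<in> szd_iter \<gamma> (1/2) (opow (1 + \<alpha>)) (unit_ball1 \<gamma>)" by blast
  then show ?thesis by (simp only: \<gamma>_def)
qed

end
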